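(* Let $n\ge1$, $r\ge0$ be integers and $\lambda$ a partition with $\ell(\lambda)\le n$ and $\lambda_1\le r$. Then $(x_1\cdots x_n)^r\,\mathrm{spo}_\lambda(x_1,\dots,x_n;z)$ is a polynomial in $x_1,\dots,x_n$ (with coefficients polynomial in $z$), and \[ \left[(x_1\cdots x_n)^r\,\mathrm{spo}_\lambda(x_1,\dots,x_n;z)\right]\Big|_{x_1=0}=\begin{cases}(x_2\cdots x_n)^r\,\mathrm{spo}_{(\lambda_2,\dots,\lambda_n)}(x_2,\dots,x_n;z)&\text{if }\lambda_1=r,\\ 0&\text{otherwise.}\end{cases} \]
   Context: Here $z$ is a single indeterminate playing the role of $Y=(y_1)$ ($m=1$). $\bar x=1/x$. Orthosymplectic Schur function: order $1<\bar1<\cdots<n<\bar n<1'<\cdots<m'$; an orthosymplectic tableau of shape $\lambda$ is a filling such that the entries from $\{1,\bar1,\dots,n,\bar n\}$ form a symplectic tableau (weakly increasing along rows, strictly increasing down columns, entries in row $i$ are $\ge i$) and the remaining primed entries form a skew filling strictly increasing along rows and weakly increasing down columns; weight $\prod_i x_i^{\#i-\#\bar i}\prod_j y_j^{\#j'}$; $\mathrm{spo}_\lambda(X;Y)$ is the sum of weights. $F|_{x_1=0}$ denotes substitution $x_1=0$ in the polynomial $F$. *)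

theory Defs
  imports Complex_Main
begin

definition is_partition :: "nat list \<Rightarrow> bool" where
  "is_partition la \<longleftrightarrow> sorted_wrt (\<ge>) la \<and> (\<forall>a\<in>set la. 0 < a)"

definition first_part :: "nat list \<Rightarrow> nat" where
  "first_part la = (case la of [] \<Rightarrow> 0 | a # _ \<Rightarrow> a)"

text \<open>Young diagram, 0-indexed cells (row, column).\<close>
definition diagram :: "nat list \<Rightarrow> (nat \<times> nat) set" where
  "diagram la = {(i, j). i < length la \<and> j < la ! i}"

text \<open>Alphabet 1 < 1bar < ... < n < nbar < 1' < ... < m' encoded as naturals:
  letter i is 2i-1, letter ibar is 2i, letter j' is 2n+j.
  An orthosymplectic tableau is a filling (0 outside the diagram) such that rows and
  columns weakly increase, unprimed entries strictly increase down columns, primed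
  entries strictly increase along rows, and unprimed entries in row i (1-indexed) are
  at least i (as letters), i.e. codes at least 2i-1.\<close>
definition osp_tableaux :: "nat \<Rightarrow> nat \<Rightarrow> nat list \<Rightarrow> ((nat \<times> nat) \<Rightarrow> nat) set" where
  "osp_tableaux n m la = {T.
     (\<forall>c. c \<notin> diagram la \<longrightarrow> T c = 0) \<and>
     (\<forall>c\<in>diagram la. 1 \<le> T c \<and> T c \<le> 2*n + m) \<and>
     (\<forall>i j. (i, Suc j) \<in> diagram la \<longrightarrow>
        T (i, j) \<le> T (i, Suc j) \<and> (2*n < T (i, j) \<longrightarrow> T (i, j) < T (i, Suc j))) \<and>
     (\<forall>i j. (Suc i, j) \<in> diagram la \<longrightarrow>
        T (i, j) \<le> T (Suc i, j) \<and> (T (i, j) \<le> 2*n \<longrightarrow> T (i, j) < T (Suc i, j))) \<and>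
     (\<forall>i j. (i, j) \<in> diagram la \<longrightarrow> T (i, j) \<le> 2*n \<longrightarrow> 2*i + 1 \<le> T (i, j))}"

definition letter_count :: "nat list \<Rightarrow> ((nat \<times> nat) \<Rightarrow> nat) \<Rightarrow> nat \<Rightarrow> nat" where
  "letter_count la T a = card {c \<in> diagram la. T c = a}"

definition osp_weight :: "nat list \<Rightarrow> complex list \<Rightarrow> complex list \<Rightarrow> ((nat \<times> nat) \<Rightarrow> nat) \<Rightarrow> complex" where
  "osp_weight la xs ys T =
     (\<Prod>i<length xs. (xs ! i) ^ letter_count la T (2*i + 1)
                    * (inverse (xs ! i)) ^ letter_count la T (2*i + 2))
   * (\<Prod>j<length ys. (ys ! j) ^ letter_count la T (2 * length xs + j + 1))"

definition spo :: "nat list \<Rightarrow> complex list \<Rightarrow> complex list \<Rightarrow> complex" where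
  "spo la xs ys = (\<Sum>T\<in>osp_tableaux (length xs) (length ys) la. osp_weight la xs ys T)"

definition mpoly_eval :: "((nat \<Rightarrow> nat) \<times> nat) set \<Rightarrow> ((nat \<Rightarrow> nat) \<times> nat \<Rightarrow> complex)
                          \<Rightarrow> complex list \<Rightarrow> complex \<Rightarrow> complex" where
  "mpoly_eval S c xs z =
     (\<Sum>(\<alpha>, k)\<in>S. c (\<alpha>, k) * (\<Prod>i<length xs. (xs ! i) ^ \<alpha> i) * z ^ k)"

end

theory Submission
  imports Defs
begin


lemma diag_iff: "(i,j) \<in> diagram la \<longleftrightarrow> i < length la \<and> j < la!i"
  by (simp add: diagram_def)

lemma diag_finite: "finite (diagram la)"
proof -
  have "diagram la = (\<Union>i<length la. (\<lambda>j. (i,j)) ` {..<la!i})"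
    by (auto simp: diagram_def)
  thus ?thesis by simp
qed

lemma diag_up: "is_partition la \<Longrightarrow> (Suc i, j) \<in> diagram la \<Longrightarrow> (i,j) \<in> diagram la"
  unfolding diag_iff is_partition_def
  using sorted_wrt_nth_less[of "(\<ge>)" la i "Suc i"] by auto

lemma diag_row0: "(0,j) \<in> diagram la \<longleftrightarrow> j < first_part la"
  by (cases la) (auto simp: diag_iff first_part_def)

lemma diag_fp: "is_partition la \<Longrightarrow> (i,j) \<in> diagram la \<Longrightarrow> j < first_part la"
  unfolding diag_iff is_partition_def first_part_def
  using sorted_wrt_nth_less[of "(\<ge>)" la 0 i]
  by (cases la; cases i) (auto, meson nth_mem order.strict_trans2)

lemma diag_tl: "(i,j) \<in> diagram (tl la) \<longleftrightarrow> (Suc i, j) \<in> diagram la"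
  by (cases la) (auto simp: diag_iff)

lemma part_tl: "is_partition la \<Longrightarrow> is_partition (tl la)"
  by (cases la) (auto simp: is_partition_def)

lemma fp_tl: "is_partition la \<Longrightarrow> first_part (tl la) \<le> first_part la"
  by (cases la; cases "tl la") (auto simp: is_partition_def first_part_def)

lemma tab_finite: "finite (osp_tableaux n m la)"
proof -
  have "osp_tableaux n m la \<subseteq> {f. \<forall>x. (x \<in> diagram la \<longrightarrow> f x \<in> {..2*n+m}) \<and> (x \<notin> diagram la \<longrightarrow> f x = 0)}"
    by (auto simp: osp_tableaux_def)
  moreover have "finite \<dots>"
    by (rule finite_set_of_finite_funs) (auto simp: diag_finite)
  ultimately show ?thesis by (rule finite_subset)
qed

lemma tab_col_chain:
  assumes T: "T \<in> osp_tableaux n m la" and P: "is_partition la"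
  shows "(i + Suc d, j) \<in> diagram la \<Longrightarrow> T (i,j) \<le> 2*n \<Longrightarrow> T (i,j) < T (i + Suc d, j)"
proof (induction d)
  case 0
  then show ?case using T unfolding osp_tableaux_def by auto
next
  case (Suc d)
  have D: "(Suc (i + Suc d), j) \<in> diagram la" using Suc.prems by simp
  have "(i + Suc d, j) \<in> diagram la" using diag_up[OF P D] .
  with Suc have "T (i,j) < T (i + Suc d, j)" by blast
  moreover have "T (i + Suc d, j) \<le> T (Suc (i + Suc d), j)"
    using T D unfolding osp_tableaux_def by blast
  ultimately show ?case by simp
qed

lemma lc_bar_le:
  assumes T: "T \<in> osp_tableaux n m la" and P: "is_partition la" and i: "i < n"
  shows "letter_count la T (2*i+2) \<le> first_part la"
proof -
  let ?A = "{c \<in> diagram la. T c = 2*i+2}"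
  have inj: "inj_on snd ?A"
  proof (rule inj_onI)
    fix a b assume a: "a \<in> ?A" and b: "b \<in> ?A" and e: "snd a = snd b"
    obtain i1 j1 where a': "a = (i1,j1)" by (cases a)
    obtain i2 j2 where b': "b = (i2,j2)" by (cases b)
    have j: "j1 = j2" using e a' b' by simp
    have "\<not> i1 < i2"
    proof
      assume "i1 < i2"
      then obtain d where "i2 = i1 + Suc d" using less_iff_Suc_add by auto
      with tab_col_chain[OF T P, of i1 d j2] a b a' b' j i show False by auto
    qed
    moreover have "\<not> i2 < i1"
    proof
      assume "i2 < i1"
      then obtain d where "i1 = i2 + Suc d" using less_iff_Suc_add by auto
      with tab_col_chain[OF T P, of i2 d j2] a b a' b' j i show False by auto
    qed
    ultimately show "a = b" using a' b' j by simp
  qed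
  have sub: "snd ` ?A \<subseteq> {..<first_part la}"
    using diag_fp[OF P] by force
  have "letter_count la T (2*i+2) = card (snd ` ?A)"
    unfolding letter_count_def using card_image[OF inj] by simp
  also have "\<dots> \<le> card {..<first_part la}" by (rule card_mono[OF _ sub]) simp
  finally show ?thesis by simp
qed

lemma alg: fixes x :: complex assumes "x \<noteq> 0" "b \<le> r + a"
  shows "x^r * (x^a * inverse x ^ b) = x^(r+a-b)"
proof -
  have "x^(r+a) = x^(r+a-b) * x^b" using assms(2) by (simp add: power_add[symmetric])
  hence "x^r * x^a = x^(r+a-b) * x^b" by (simp add: power_add)
  thus ?thesis using assms(1) by (simp add: power_inverse field_simps)
qed



definition mono :: "complex list \<Rightarrow> complex \<Rightarrow> (nat\<Rightarrow>nat)\<times>nat \<Rightarrow> complex" where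
  "mono xs z p = (\<Prod>i<length xs. xs!i ^ fst p i) * z ^ snd p"

definition ex :: "nat \<Rightarrow> nat \<Rightarrow> nat list \<Rightarrow> ((nat\<times>nat)\<Rightarrow>nat) \<Rightarrow> (nat\<Rightarrow>nat)\<times>nat" where
  "ex r n la T = ((\<lambda>i. r + letter_count la T (2*i+1) - letter_count la T (2*i+2)),
                  letter_count la T (2*n+1))"

lemma weight_mono:
  assumes T: "T \<in> osp_tableaux n 1 la" and P: "is_partition la" and r: "first_part la \<le> r"
    and len: "length xs = n" and nz: "\<forall>x\<in>set xs. x \<noteq> 0"
  shows "prod_list xs ^ r * osp_weight la xs [z] T = mono xs z (ex r n la T)"
proof -
  have pl: "prod_list xs = (\<Prod>i<n. xs!i)"
    using len by (simp add: prod.list_conv_set_nth atLeast0LessThan)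
  have each: "xs!i ^ r * (xs!i ^ letter_count la T (2*i+1) * inverse (xs!i) ^ letter_count la T (2*i+2))
      = xs!i ^ fst (ex r n la T) i" if i: "i < n" for i
  proof -
    have "xs!i \<noteq> 0" using nz len i by auto
    moreover have "letter_count la T (2*i+2) \<le> r + letter_count la T (2*i+1)"
      using lc_bar_le[OF T P i] r by linarith
    ultimately show ?thesis unfolding ex_def by (simp add: alg)
  qed
  have "prod_list xs ^ r * osp_weight la xs [z] T
     = (\<Prod>i<n. xs!i ^ r) * (\<Prod>i<n. xs!i ^ letter_count la T (2*i+1) * inverse (xs!i) ^ letter_count la T (2*i+2))
        * z ^ letter_count la T (2*n+1)"
    unfolding pl osp_weight_def using len by (simp add: prod_power_distrib)
  also have "\<dots> = (\<Prod>i<n. xs!i ^ fst (ex r n la T) i) * z ^ letter_count la T (2*n+1)"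
    by (subst prod.distrib[symmetric], rule arg_cong[where f="\<lambda>u. u * _"], rule prod.cong, simp_all only: lessThan_iff each)
  finally show ?thesis unfolding mono_def ex_def using len by simp
qed

lemma mpoly_eval_image:
  assumes "finite A"
  shows "mpoly_eval (f ` A) (\<lambda>p. of_nat (card {x\<in>A. f x = p})) xs z = (\<Sum>x\<in>A. mono xs z (f x))"
proof -
  have "(\<Sum>x\<in>A. mono xs z (f x)) = (\<Sum>y\<in>f ` A. \<Sum>x\<in>{x\<in>A. f x = y}. mono xs z (f x))"
    by (rule sum.image_gen[OF assms])
  also have "\<dots> = (\<Sum>y\<in>f ` A. of_nat (card {x\<in>A. f x = y}) * mono xs z y)"
    by (rule sum.cong) auto
  finally show ?thesis unfolding mpoly_eval_def mono_def
    by (simp add: case_prod_beta mult.assoc)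
qed



lemma tab_low:
  assumes T: "T \<in> osp_tableaux n m la" and n: "1 \<le> n" and c: "c \<in> diagram la" and v: "T c \<le> 2"
  shows "fst c = 0"
proof -
  obtain i j where cc: "c = (i,j)" by (cases c)
  have "2*i+1 \<le> T (i,j)" using T c v n cc unfolding osp_tableaux_def by auto
  thus ?thesis using v cc by simp
qed

lemma ex0_iff:
  assumes T: "T \<in> osp_tableaux n 1 la" and P: "is_partition la" and n: "1 \<le> n" and r: "first_part la \<le> r"
  shows "fst (ex r n la T) 0 = 0 \<longleftrightarrow> (first_part la = r \<and> (\<forall>j<first_part la. T (0,j) = 2))"
proof -
  let ?A1 = "{c \<in> diagram la. T c = 1}"
  let ?A2 = "{c \<in> diagram la. T c = 2}"
  let ?R0 = "(\<lambda>j. (0::nat,j)) ` {..<first_part la}"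
  have R0: "?R0 = {c \<in> diagram la. fst c = 0}"
    using diag_row0 by force
  have s1: "?A1 \<subseteq> ?R0" using tab_low[OF T n] unfolding R0 by auto
  have s2: "?A2 \<subseteq> ?R0" using tab_low[OF T n] unfolding R0 by auto
  have cR: "card ?R0 = first_part la" by (simp add: card_image inj_on_def)
  have fR: "finite ?R0" by simp
  have "card ?A1 + card ?A2 = card (?A1 \<union> ?A2)"
    by (rule card_Un_disjoint[symmetric]) (use finite_subset[OF s1 fR] finite_subset[OF s2 fR] in auto)
  also have "\<dots> \<le> card ?R0" by (rule card_mono[OF fR]) (use s1 s2 in auto)
  finally have le: "card ?A1 + card ?A2 \<le> first_part la" using cR by simp
  have e: "fst (ex r n la T) 0 = r + card ?A1 - card ?A2"
    unfolding ex_def letter_count_def by (simp add: numeral_2_eq_2)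
  show ?thesis
  proof
    assume "fst (ex r n la T) 0 = 0"
    hence h: "r + card ?A1 \<le> card ?A2" using e by simp
    hence c2: "card ?A2 = card ?R0" and fr: "first_part la = r" using le r cR by linarith+
    have "?A2 = ?R0" by (rule card_subset_eq[OF fR s2 c2])
    hence "\<forall>j<first_part la. T (0,j) = 2" by (metis (mono_tags, lifting) image_eqI lessThan_iff mem_Collect_eq)
    with fr show "first_part la = r \<and> (\<forall>j<first_part la. T (0,j) = 2)" by simp
  next
    assume h: "first_part la = r \<and> (\<forall>j<first_part la. T (0,j) = 2)"
    have "?R0 \<subseteq> ?A2" using h R0 diag_row0 by auto
    hence "?A2 = ?R0" using s2 by blast
    hence c2: "card ?A2 = r" using cR h by simp
    have "?A1 = {}" using s1 h by force
    hence "card ?A1 = 0" by (simp only: card.empty)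
    thus "fst (ex r n la T) 0 = 0" using e c2 by linarith
  qed
qed

definition shift :: "nat list \<Rightarrow> ((nat\<times>nat)\<Rightarrow>nat) \<Rightarrow> ((nat\<times>nat)\<Rightarrow>nat)" where
  "shift la T = (\<lambda>(i,j). if (i,j) \<in> diagram (tl la) then T (Suc i, j) - 2 else 0)"

definition unshift :: "nat list \<Rightarrow> ((nat\<times>nat)\<Rightarrow>nat) \<Rightarrow> ((nat\<times>nat)\<Rightarrow>nat)" where
  "unshift la T = (\<lambda>(i,j). if (i,j) \<in> diagram la then (if i = 0 then 2 else T (i - 1, j) + 2) else 0)"

definition tab0 :: "nat \<Rightarrow> nat list \<Rightarrow> ((nat\<times>nat)\<Rightarrow>nat) set" where
  "tab0 n la = {T \<in> osp_tableaux n 1 la. \<forall>j<first_part la. T (0,j) = 2}"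

lemma tab0_ge3:
  assumes T: "T \<in> tab0 n la" and n: "1 \<le> n" and c: "(Suc i, j) \<in> diagram la"
  shows "3 \<le> T (Suc i, j)"
proof -
  have T': "T \<in> osp_tableaux n 1 la" using T by (simp add: tab0_def)
  have "T (Suc i, j) \<le> 2*n \<longrightarrow> 2*(Suc i)+1 \<le> T (Suc i, j)"
    using T' c unfolding osp_tableaux_def by blast
  thus ?thesis using n by (cases "T (Suc i, j) \<le> 2*n") auto
qed



lemma shift_app: "shift la T (i,j) = (if (Suc i, j) \<in> diagram la then T (Suc i, j) - 2 else 0)"
  by (simp add: shift_def diag_tl)

lemma diag_left: "(i, Suc j) \<in> diagram la \<Longrightarrow> (i,j) \<in> diagram la"
  by (simp add: diag_iff)

lemma shift_mem:
  assumes T: "T \<in> tab0 n la" and P: "is_partition la" and n: "1 \<le> n"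
  shows "shift la T \<in> osp_tableaux (n-1) 1 (tl la)"
proof -
  have T': "T \<in> osp_tableaux n 1 la" using T by (simp add: tab0_def)
  note ge3 = tab0_ge3[OF T n]
  have t2: "\<forall>c\<in>diagram la. 1 \<le> T c \<and> T c \<le> 2*n + 1"
   and t3: "\<forall>i j. (i, Suc j) \<in> diagram la \<longrightarrow>
        T (i, j) \<le> T (i, Suc j) \<and> (2*n < T (i, j) \<longrightarrow> T (i, j) < T (i, Suc j))"
   and t4: "\<forall>i j. (Suc i, j) \<in> diagram la \<longrightarrow>
        T (i, j) \<le> T (Suc i, j) \<and> (T (i, j) \<le> 2*n \<longrightarrow> T (i, j) < T (Suc i, j))"
   and t5: "\<forall>i j. (i, j) \<in> diagram la \<longrightarrow> T (i, j) \<le> 2*n \<longrightarrow> 2*i + 1 \<le> T (i, j)"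
    using T' unfolding osp_tableaux_def by blast+
  show ?thesis unfolding osp_tableaux_def
  proof (intro CollectI conjI allI impI ballI)
    fix c assume "c \<notin> diagram (tl la)" thus "shift la T c = 0" by (cases c) (simp add: shift_def)
  next
    fix c assume c: "c \<in> diagram (tl la)"
    obtain i j where cc: "c = (i,j)" by (cases c)
    have d: "(Suc i, j) \<in> diagram la" using c cc diag_tl by auto
    have "3 \<le> T (Suc i, j)" "T (Suc i, j) \<le> 2*n+1" using ge3[OF d] t2 d by auto
    thus "1 \<le> shift la T c" "shift la T c \<le> 2*(n-1) + 1" using d cc n by (auto simp: shift_app)
  next
    fix i j assume c: "(i, Suc j) \<in> diagram (tl la)"
    have d: "(Suc i, Suc j) \<in> diagram la" using c diag_tl by auto
    have d2: "(Suc i, j) \<in> diagram la" using diag_left[OF d] .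
    have a: "3 \<le> T (Suc i, j)" "3 \<le> T (Suc i, Suc j)" using ge3 d d2 by auto
    have b: "T (Suc i, j) \<le> T (Suc i, Suc j)" "2*n < T (Suc i, j) \<longrightarrow> T (Suc i, j) < T (Suc i, Suc j)"
      using t3 d by auto
    show "shift la T (i, j) \<le> shift la T (i, Suc j)" using a b d d2 by (simp add: shift_app)
    show "2*(n-1) < shift la T (i, j) \<Longrightarrow> shift la T (i, j) < shift la T (i, Suc j)"
      using a b d d2 n by (simp add: shift_app) linarith
  next
    fix i j assume c: "(Suc i, j) \<in> diagram (tl la)"
    have d: "(Suc (Suc i), j) \<in> diagram la" using c diag_tl by auto
    have d2: "(Suc i, j) \<in> diagram la" using diag_up[OF P d] .
    have a: "3 \<le> T (Suc i, j)" "3 \<le> T (Suc (Suc i), j)" using ge3 d d2 by auto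
    have b: "T (Suc i, j) \<le> T (Suc (Suc i), j)" "T (Suc i, j) \<le> 2*n \<longrightarrow> T (Suc i, j) < T (Suc (Suc i), j)"
      using t4 d by auto
    show "shift la T (i, j) \<le> shift la T (Suc i, j)" using a b d d2 by (simp add: shift_app)
    show "shift la T (i, j) \<le> 2*(n-1) \<Longrightarrow> shift la T (i, j) < shift la T (Suc i, j)"
      using a b d d2 n by (simp add: shift_app) linarith
  next
    fix i j assume c: "(i, j) \<in> diagram (tl la)" and le: "shift la T (i, j) \<le> 2*(n-1)"
    have d: "(Suc i, j) \<in> diagram la" using c diag_tl by auto
    have a: "3 \<le> T (Suc i, j)" using ge3 d by auto
    have "T (Suc i, j) \<le> 2*n" using le a d n by (simp add: shift_app)
    hence "2*(Suc i)+1 \<le> T (Suc i, j)" using t5 d by blast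
    thus "2*i + 1 \<le> shift la T (i, j)" using d a by (simp add: shift_app)
  qed
qed



lemma unshift0: "unshift la T (0,j) = (if (0,j) \<in> diagram la then 2 else 0)"
  by (simp add: unshift_def)
lemma unshiftS: "unshift la T (Suc i,j) = (if (i,j) \<in> diagram (tl la) then T (i,j) + 2 else 0)"
  by (simp add: unshift_def diag_tl)

lemma unshift_mem:
  assumes T: "T \<in> osp_tableaux (n-1) 1 (tl la)" and P: "is_partition la" and n: "1 \<le> n"
  shows "unshift la T \<in> tab0 n la"
proof -
  have t1: "\<forall>c. c \<notin> diagram (tl la) \<longrightarrow> T c = 0"
   and t2: "\<forall>c\<in>diagram (tl la). 1 \<le> T c \<and> T c \<le> 2*(n-1) + 1"
   and t3: "\<forall>i j. (i, Suc j) \<in> diagram (tl la) \<longrightarrow>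
        T (i, j) \<le> T (i, Suc j) \<and> (2*(n-1) < T (i, j) \<longrightarrow> T (i, j) < T (i, Suc j))"
   and t4: "\<forall>i j. (Suc i, j) \<in> diagram (tl la) \<longrightarrow>
        T (i, j) \<le> T (Suc i, j) \<and> (T (i, j) \<le> 2*(n-1) \<longrightarrow> T (i, j) < T (Suc i, j))"
   and t5: "\<forall>i j. (i, j) \<in> diagram (tl la) \<longrightarrow> T (i, j) \<le> 2*(n-1) \<longrightarrow> 2*i + 1 \<le> T (i, j)"
    using T unfolding osp_tableaux_def by blast+
  have "unshift la T \<in> osp_tableaux n 1 la" unfolding osp_tableaux_def
  proof (intro CollectI conjI allI impI ballI)
    fix c assume "c \<notin> diagram la" thus "unshift la T c = 0" by (cases c) (simp add: unshift_def)
  next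
    fix c assume c: "c \<in> diagram la"
    obtain i j where cc: "c = (i,j)" by (cases c)
    show "1 \<le> unshift la T c" "unshift la T c \<le> 2*n + 1"
    proof (atomize (full), cases i)
      case 0 then show "1 \<le> unshift la T c \<and> unshift la T c \<le> 2*n + 1" using c cc n by (simp add: unshift0)
    next
      case (Suc k)
      hence "(k,j) \<in> diagram (tl la)" using c cc diag_tl by auto
      then show "1 \<le> unshift la T c \<and> unshift la T c \<le> 2*n + 1" using t2 Suc cc n by (auto simp: unshiftS)
    qed
  next
    fix i j assume c: "(i, Suc j) \<in> diagram la"
    have c2: "(i, j) \<in> diagram la" using diag_left[OF c] .
    show "unshift la T (i, j) \<le> unshift la T (i, Suc j)" "2*n < unshift la T (i, j) \<Longrightarrow> unshift la T (i, j) < unshift la T (i, Suc j)"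
    proof (atomize (full), cases i)
      case 0 then show "unshift la T (i, j) \<le> unshift la T (i, Suc j) \<and> (2*n < unshift la T (i, j) \<longrightarrow> unshift la T (i, j) < unshift la T (i, Suc j))"
        using c c2 n by (simp add: unshift0)
    next
      case (Suc k)
      hence d: "(k,Suc j) \<in> diagram (tl la)" "(k,j) \<in> diagram (tl la)" using c c2 diag_tl by auto
      then show "unshift la T (i, j) \<le> unshift la T (i, Suc j) \<and> (2*n < unshift la T (i, j) \<longrightarrow> unshift la T (i, j) < unshift la T (i, Suc j))"
        using t3 Suc n by (auto simp: unshiftS)
    qed
  next
    fix i j assume c: "(Suc i, j) \<in> diagram la"
    have c2: "(i, j) \<in> diagram la" using diag_up[OF P c] .
    have d: "(i,j) \<in> diagram (tl la)" using c diag_tl by auto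
    show "unshift la T (i, j) \<le> unshift la T (Suc i, j)" "unshift la T (i, j) \<le> 2*n \<Longrightarrow> unshift la T (i, j) < unshift la T (Suc i, j)"
    proof (atomize (full), cases i)
      case 0 then show "unshift la T (i, j) \<le> unshift la T (Suc i, j) \<and> (unshift la T (i, j) \<le> 2*n \<longrightarrow> unshift la T (i, j) < unshift la T (Suc i, j))"
        using c2 d t2 by (auto simp: unshift0 unshiftS)
    next
      case (Suc k)
      hence d2: "(k,j) \<in> diagram (tl la)" using c2 diag_tl by auto
      then show "unshift la T (i, j) \<le> unshift la T (Suc i, j) \<and> (unshift la T (i, j) \<le> 2*n \<longrightarrow> unshift la T (i, j) < unshift la T (Suc i, j))"
        using t4 Suc n d by (auto simp: unshiftS)
    qed
  next
    fix i j assume c: "(i, j) \<in> diagram la" and le: "unshift la T (i, j) \<le> 2*n"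
    show "2*i + 1 \<le> unshift la T (i, j)"
    proof (cases i)
      case 0 then show ?thesis using c by (simp add: unshift0)
    next
      case (Suc k)
      hence d: "(k,j) \<in> diagram (tl la)" using c diag_tl by auto
      then show ?thesis using t5 Suc le n by (auto simp: unshiftS)
    qed
  qed
  thus ?thesis unfolding tab0_def by (simp add: unshift0 diag_row0)
qed

lemma unshift_shift:
  assumes T: "T \<in> tab0 n la" and n: "1 \<le> n"
  shows "unshift la (shift la T) = T"
proof
  fix c :: "nat \<times> nat"
  obtain i j where cc: "c = (i,j)" by (cases c)
  have T': "T \<in> osp_tableaux n 1 la" using T by (simp add: tab0_def)
  show "unshift la (shift la T) c = T c"
  proof (cases "(i,j) \<in> diagram la")
    case False thus ?thesis using T' cc by (simp add: unshift_def osp_tableaux_def)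
  next
    case True
    show ?thesis
    proof (cases i)
      case 0 thus ?thesis using True T cc by (simp add: unshift0 tab0_def diag_row0)
    next
      case (Suc k)
      hence "3 \<le> T (Suc k, j)" using tab0_ge3[OF T n] True by auto
      thus ?thesis using True Suc cc diag_tl by (simp add: unshiftS shift_app)
    qed
  qed
qed

lemma shift_unshift:
  assumes T: "T \<in> osp_tableaux (n-1) 1 (tl la)"
  shows "shift la (unshift la T) = T"
proof
  fix c :: "nat \<times> nat"
  obtain i j where cc: "c = (i,j)" by (cases c)
  show "shift la (unshift la T) c = T c"
    using T cc diag_tl[of i j la] by (auto simp: shift_app unshiftS osp_tableaux_def)
qed

lemma shift_bij:
  assumes P: "is_partition la" and n: "1 \<le> n"
  shows "bij_betw (shift la) (tab0 n la) (osp_tableaux (n-1) 1 (tl la))"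
  by (rule bij_betw_byWitness[where f'="unshift la"])
     (use unshift_shift[OF _ n] shift_unshift shift_mem[OF _ P n] unshift_mem[OF _ P n] in auto)

lemma lc_shift:
  assumes T: "T \<in> tab0 n la" and n: "1 \<le> n" and a: "1 \<le> a"
  shows "letter_count la T (a+2) = letter_count (tl la) (shift la T) a"
proof -
  let ?A = "{c \<in> diagram la. T c = a+2}"
  let ?B = "{c \<in> diagram (tl la). shift la T c = a}"
  have "?A = (\<lambda>(i,j). (Suc i, j)) ` ?B"
  proof (intro set_eqI iffI)
    fix c assume c: "c \<in> ?A"
    obtain i j where cc: "c = (i,j)" by (cases c)
    have "i \<noteq> 0"
    proof
      assume i0: "i = 0"
      hence "j < first_part la" using c cc diag_row0 by auto
      hence "T (0,j) = 2" using T by (simp add: tab0_def)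
      thus False using c cc i0 a by auto
    qed
    then obtain k where k: "i = Suc k" by (cases i) auto
    have "(k,j) \<in> ?B" using c cc k diag_tl by (auto simp: shift_app)
    thus "c \<in> (\<lambda>(i,j). (Suc i, j)) ` ?B" using cc k by force
  next
    fix c assume "c \<in> (\<lambda>(i,j). (Suc i, j)) ` ?B"
    then obtain k j where c: "c = (Suc k, j)" "(k,j) \<in> ?B" by auto
    have d: "(Suc k, j) \<in> diagram la" using c diag_tl by auto
    have "3 \<le> T (Suc k, j)" using tab0_ge3[OF T n d] .
    thus "c \<in> ?A" using c d by (auto simp: shift_app)
  qed
  moreover have "inj_on (\<lambda>(i,j). (Suc i, j)) ?B" by (auto simp: inj_on_def)
  ultimately show ?thesis unfolding letter_count_def by (simp add: card_image)
qed



lemma mono_cons0: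
  "mono (0 # ys) z p = (if fst p 0 = 0 then mono ys z (\<lambda>i. fst p (Suc i), snd p) else 0)"
  unfolding mono_def by (simp add: prod.lessThan_Suc_shift del: prod.lessThan_Suc)

lemma shifted_ex:
  assumes T: "T \<in> tab0 n la" and n: "1 \<le> n"
  shows "(\<lambda>i. fst (ex r n la T) (Suc i), snd (ex r n la T)) = ex r (n-1) (tl la) (shift la T)"
proof -
  have L: "letter_count la T (a+2) = letter_count (tl la) (shift la T) a" if "1 \<le> a" for a
    using lc_shift[OF T n that] .
  have e1: "letter_count la T (2*Suc i+1) = letter_count (tl la) (shift la T) (2*i+1)" for i
    using L[of "2*i+1"] by (simp add: algebra_simps)
  have e2: "letter_count la T (2*Suc i+2) = letter_count (tl la) (shift la T) (2*i+2)" for i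
    using L[of "2*i+2"] by (simp add: algebra_simps)
  have e3: "letter_count la T (2*n+1) = letter_count (tl la) (shift la T) (2*(n-1)+1)"
  proof -
    have h: "2*(n-1)+1+2 = 2*n+1" using n by simp
    show ?thesis using L[of "2*(n-1)+1"] unfolding h by simp
  qed
  show ?thesis unfolding ex_def using e1 e2 e3 by (simp del: mult_Suc_right add: fun_eq_iff)
qed

theorem lemma4p3:
  fixes n r :: nat and la :: "nat list"
  assumes "1 \<le> n" and "is_partition la" and "length la \<le> n" and "first_part la \<le> r"
  shows "\<exists>S c. finite S \<and>
     (\<forall>xs z. length xs = n \<longrightarrow> (\<forall>x\<in>set xs. x \<noteq> 0) \<longrightarrow>
        prod_list xs ^ r * spo la xs [z] = mpoly_eval S c xs z) \<and>
     (\<forall>ys z. length ys = n - 1 \<longrightarrow> (\<forall>y\<in>set ys. y \<noteq> 0) \<longrightarrow>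
        mpoly_eval S c (0 # ys) z =
          (if first_part la = r then prod_list ys ^ r * spo (tl la) ys [z] else 0))"
proof -
  note n = assms(1) and P = assms(2) and r = assms(4)
  let ?Tab = "osp_tableaux n 1 la"
  let ?f = "ex r n la"
  define S where "S = ?f ` ?Tab"
  define c where "c = (\<lambda>p. of_nat (card {x\<in>?Tab. ?f x = p}) :: complex)"
  have fin: "finite ?Tab" by (rule tab_finite)
  have ME: "mpoly_eval S c xs z = (\<Sum>T\<in>?Tab. mono xs z (?f T))" for xs z
    unfolding S_def c_def by (rule mpoly_eval_image[OF fin])
  have part1: "prod_list xs ^ r * spo la xs [z] = mpoly_eval S c xs z"
    if len: "length xs = n" and nz: "\<forall>x\<in>set xs. x \<noteq> 0" for xs z
  proof -
    have "prod_list xs ^ r * spo la xs [z] = (\<Sum>T\<in>?Tab. prod_list xs ^ r * osp_weight la xs [z] T)"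
      unfolding spo_def using len by (simp add: sum_distrib_left)
    also have "\<dots> = (\<Sum>T\<in>?Tab. mono xs z (?f T))"
      by (rule sum.cong[OF refl], rule weight_mono[OF _ P r len nz])
    finally show ?thesis using ME by simp
  qed
  have part2: "mpoly_eval S c (0 # ys) z =
          (if first_part la = r then prod_list ys ^ r * spo (tl la) ys [z] else 0)"
    if len: "length ys = n - 1" and nz: "\<forall>y\<in>set ys. y \<noteq> 0" for ys z
  proof -
    let ?g = "\<lambda>T. mono ys z (\<lambda>i. fst (?f T) (Suc i), snd (?f T))"
    have "mpoly_eval S c (0 # ys) z = (\<Sum>T\<in>?Tab. if first_part la = r \<and> (\<forall>j<first_part la. T (0,j) = 2) then ?g T else 0)"
      unfolding ME mono_cons0 by (rule sum.cong[OF refl]) (simp add: ex0_iff[OF _ P n r])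
    also have "\<dots> = (if first_part la = r then prod_list ys ^ r * spo (tl la) ys [z] else 0)"
    proof (cases "first_part la = r")
      case False thus ?thesis by simp
    next
      case True
      have "(\<Sum>T\<in>?Tab. if first_part la = r \<and> (\<forall>j<first_part la. T (0,j) = 2) then ?g T else 0)
          = (\<Sum>T\<in>tab0 n la. ?g T)"
        unfolding tab0_def sum.inter_filter[OF fin] using True by simp
      also have "\<dots> = (\<Sum>T\<in>tab0 n la. prod_list ys ^ r * osp_weight (tl la) ys [z] (shift la T))"
      proof (rule sum.cong[OF refl])
        fix T assume T: "T \<in> tab0 n la"
        have "?g T = mono ys z (ex r (n-1) (tl la) (shift la T))" using shifted_ex[OF T n] by simp
        also have "\<dots> = prod_list ys ^ r * osp_weight (tl la) ys [z] (shift la T)"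
          by (rule weight_mono[symmetric, OF shift_mem[OF T P n] part_tl[OF P] _ len nz])
             (use fp_tl[OF P] r in linarith)
        finally show "?g T = prod_list ys ^ r * osp_weight (tl la) ys [z] (shift la T)" .
      qed
      also have "\<dots> = (\<Sum>T'\<in>osp_tableaux (n-1) 1 (tl la). prod_list ys ^ r * osp_weight (tl la) ys [z] T')"
        by (rule sum.reindex_bij_betw[OF shift_bij[OF P n]])
      also have "\<dots> = prod_list ys ^ r * spo (tl la) ys [z]"
        unfolding spo_def using len by (simp add: sum_distrib_left)
      finally show ?thesis using True by simp
    qed
    finally show ?thesis .
  qed
  show ?thesis
    by (rule exI[of _ S], rule exI[of _ c]) (use fin part1 part2 in \<open>auto simp: S_def\<close>)
qed

end
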